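(* Let $q\equiv 3\pmod 4$ be a prime power with $q\geq 7$, let $n\geq 3$ be an integer and let $q'$ be a prime power. The parameter triples $$\Big(q,\tfrac{q-1}{2},\tfrac{q-3}{4}\Big)\quad\text{and}\quad\Big(\tfrac{q'^n-1}{q'-1},\tfrac{q'^{n-1}-1}{q'-1},\tfrac{q'^{n-2}-1}{q'-1}\Big)$$ (of the bi-Paley graph $BP(q)$ and of the incidence graph $I_n(q')$, respectively) coincide only when $q'=2$ and $q=2^n-1$ is a prime.
   Context: These triples are the design parameters (half-size, degree, number of common neighbours of two distinct same-colour vertices) of the bi-Paley graph $BP(q)$ and of the incidence graph $I_n(q')$ of $1$-dimensional versus $(n-1)$-dimensional subspaces of an $n$-dimensional vector space over the field with $q'$ elements. *)

theory Defs
  imports "HOL-Number_Theory.Number_Theory"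
begin

end

theory Submission
  imports Defs
begin

lemma altsum_parity:
  fixes p :: int assumes "odd p"
  shows "odd (\<Sum>i<k. (-p)^i) \<longleftrightarrow> odd k"
  by (induction k) (auto simp: assms)

lemma altsum_prod:
  fixes p :: int
  shows "(1 + p) * (\<Sum>i<k. (-p)^i) = 1 - (-p)^k"
proof -
  have "(1 - (-p)) * (\<Sum>i<k. (-p)^i) = 1 - (-p)^k"
    by (rule one_diff_power_eq[symmetric, THEN trans[OF _ refl]]) 
  then show ?thesis by simp
qed

lemma key:
  fixes p k m :: nat
  assumes "prime p" "0 < k" "p^k + 1 = 2^m" "m \<ge> 2"
  shows "k = 1"
proof -
  have m4: "(2::nat)^m mod 4 = 0"
  proof -
    obtain d where "m = d + 2" using assms(4) by (metis le_add_diff_inverse2)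
    then show ?thesis by (simp add: power_add)
  qed
  have oddp: "odd p"
  proof
    assume "even p"
    then have "even (p^k)" using assms(2) by simp
    then have "odd ((2::nat)^m)" using assms(3) by (metis even_plus_one_iff)
    then show False using assms(4) by simp
  qed
  show ?thesis
  proof (cases "even k")
    case True
    then obtain j where kj: "k = 2*j" by blast
    have "odd (p^j)" using oddp by simp
    then obtain t where t: "p^j = 2*t+1" by (rule oddE)
    have "p^k = (2*t+1)^2" using kj t by (simp add: power_mult power_mult_distrib mult.commute)
    also have "\<dots> = 4*(t*t+t) + 1" by (simp add: power2_eq_square algebra_simps)
    finally have eq: "p^k + 1 = 4*(t*t+t) + 2" by simp
    have h4: "\<And>s::nat. (4*s+2) mod 4 = 2" by presburger
    have "(p^k + 1) mod 4 = (4*(t*t+t) + 2) mod 4" using eq by (rule arg_cong)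
    also have "\<dots> = 2" by (rule h4)
    finally have "(p^k + 1) mod 4 = 2" .
    with assms(3) m4 show ?thesis by simp
  next
    case False
    define c :: int where "c = (\<Sum>i<k. (-int p)^i)"
    have oc: "odd c" unfolding c_def using altsum_parity[of "int p" k] oddp False by simp
    have "(1 + int p) * c = 1 + int p ^ k"
      using altsum_prod[of "int p" k] False unfolding c_def by (simp add: power_minus_odd)
    also have "\<dots> = 2^m" using arg_cong[OF assms(3), of int] by simp
    finally have cd: "c dvd 2^m" by (metis dvd_triv_right)
    have "coprime c (2^m)" using oc by (simp add: coprime_commute)
    then have "is_unit c" by (rule coprime_common_divisor[OF _ dvd_refl cd])
    then have "c = 1 \<or> c = -1" by auto
    moreover have "c \<noteq> -1"
    proof
      assume "c = -1"
      then have "(1 + int p) * c < 0" by simp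
      moreover have "(1 + int p) * c = 1 + int p ^ k"
        using altsum_prod[of "int p" k] False unfolding c_def by (simp add: power_minus_odd)
      ultimately show False by (smt (verit) zero_le_power of_nat_0_le_iff)
    qed
    ultimately have "c = 1" by blast
    then have "int p ^ k = int p"
      using altsum_prod[of "int p" k] False unfolding c_def by (simp add: power_minus_odd)
    then have pk: "p^k = p" by (metis of_nat_eq_iff of_nat_power)
    have p2: "p \<ge> 2" using assms(1) prime_ge_2_nat by blast
    show ?thesis
    proof (rule ccontr)
      assume "k \<noteq> 1"
      then have "k \<ge> 2" using assms(2) by simp
      then have "p^2 \<le> p^k" using p2 by (simp add: power_increasing)
      moreover have "p < p^2" using p2 by (simp add: power2_eq_square)
      ultimately show False using pk by simp
    qed
  qed
qed

theorem mainTheorem9: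
  fixes q q' n :: nat
  assumes "primepow q" and "q mod 4 = 3" and "q \<ge> 7"
    and "n \<ge> 3" and "primepow q'"
    and "((of_nat q :: rat), (of_nat q - 1) / (2::rat), (of_nat q - 3) / (4::rat))
         = ((of_nat q' ^ n - 1) / (of_nat q' - 1),
            (of_nat q' ^ (n - 1) - 1) / (of_nat q' - 1 :: rat),
            (of_nat q' ^ (n - 2) - 1) / (of_nat q' - 1 :: rat))"
  shows "q' = 2 \<and> q = 2 ^ n - 1 \<and> prime q"
proof -
  define r :: rat where "r = of_nat q'"
  define Q :: rat where "Q = of_nat q"
  have r2: "r \<ge> 2" using primepow_gt_Suc_0[OF assms(5)] unfolding r_def by simp
  have rne: "r - 1 \<noteq> 0" using r2 by simp
  have e1: "Q * (r - 1) = r^n - 1" using assms(6) rne unfolding r_def Q_def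
    by (simp add: field_simps)
  have e2: "(Q - 1) * (r - 1) = 2 * (r^(n-1) - 1)" using assms(6) rne unfolding r_def Q_def
    by (simp add: field_simps)
  have rn: "r^n = r * r^(n-1)" using assms(4) by (cases n) auto
  have "(r - 2) * (Q - 1) * (r - 1) = 0"
  proof -
    have "r * ((Q - 1) * (r - 1)) = r * (2 * (r^(n-1) - 1))" using e2 by simp
    also have "\<dots> = 2 * (r * r^(n-1)) - 2 * r" by (simp add: algebra_simps)
    also have "\<dots> = 2 * (Q * (r - 1) + 1) - 2 * r" using rn e1 by simp
    finally have A: "r * ((Q - 1) * (r - 1)) = 2 * (Q * (r - 1) + 1) - 2 * r" .
    have "(r - 2) * (Q - 1) * (r - 1) = r * ((Q - 1) * (r - 1)) - 2 * (Q - 1) * (r - 1)" by (simp add: algebra_simps)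
    also have "\<dots> = 0" unfolding A by (simp add: algebra_simps)
    finally show ?thesis .
  qed
  moreover have "Q - 1 \<noteq> 0" using assms(3) unfolding Q_def by simp
  ultimately have "r = 2" using rne by simp
  then have q'2: "q' = 2" unfolding r_def by simp
  have "Q = 2^n - 1" using e1 \<open>r = 2\<close> by simp
  then have "int q = 2^n - 1" unfolding Q_def by (metis of_int_eq_iff of_int_of_nat_eq of_int_diff of_int_power of_int_numeral of_int_1)
  then have "int (q + 1) = int (2^n)" by simp
  then have qn: "q + 1 = 2^n" by (metis of_nat_eq_iff)
  then have qeq: "q = 2^n - 1" by simp
  obtain p k where pk: "prime p" "0 < k" "q = p^k" using assms(1) unfolding primepow_def by blast
  have "k = 1" using key[OF pk(1) pk(2)] qn pk(3) assms(4) by simp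
  then have "prime q" using pk by simp
  with q'2 qeq show ?thesis by simp
qed

end
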